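(* Let $G$ be a compact group, $H$ a normal subgroup of $G$, $K=G/H$ with quotient map $g\mapsto[g]$. Let $(l_n)_{n\in\mathbb{N}}$ be continuous length functions on $G$ converging uniformly on $G$ to a function $\widetilde{l_\infty}$ with $\widetilde{l_\infty}(g)=0$ for $g\in H$ and $\widetilde{l_\infty}(g)>0$ for $g\notin H$. Then there exists a continuous length function $l_\infty$ on $K$ such that $l_n(g)\to l_\infty([g])$ as $n\to\infty$ for all $g\in G$.
   Context: A length function on a group with unit $e$: $l\ge0$, $l(g)=0$ iff $g=e$, $l(g^{-1})=l(g)$, $l(gh)\le l(g)+l(h)$. *)

theory Defs
  imports "HOL-Analysis.Analysis" "HOL-Algebra.Coset"
begin

definition length_function :: "('a, 'b) monoid_scheme \<Rightarrow> ('a \<Rightarrow> real) \<Rightarrow> bool" where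
  "length_function G l \<longleftrightarrow>
     (\<forall>g\<in>carrier G. 0 \<le> l g) \<and>
     (\<forall>g\<in>carrier G. l g = 0 \<longleftrightarrow> g = \<one>\<^bsub>G\<^esub>) \<and>
     (\<forall>g\<in>carrier G. l (inv\<^bsub>G\<^esub> g) = l g) \<and>
     (\<forall>g\<in>carrier G. \<forall>h\<in>carrier G. l (g \<otimes>\<^bsub>G\<^esub> h) \<le> l g + l h)"

definition topological_group :: "('a, 'b) monoid_scheme \<Rightarrow> 'a topology \<Rightarrow> bool" where
  "topological_group G T \<longleftrightarrow>
     group G \<and> topspace T = carrier G \<and>
     continuous_map (prod_topology T T) T (\<lambda>(x, y). x \<otimes>\<^bsub>G\<^esub> y) \<and>
     continuous_map T T (\<lambda>x. inv\<^bsub>G\<^esub> x)"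

definition compact_group :: "('a, 'b) monoid_scheme \<Rightarrow> 'a topology \<Rightarrow> bool" where
  "compact_group G T \<longleftrightarrow> topological_group G T \<and> compact_space T \<and> Hausdorff_space T"

definition quotient_top :: "'a topology \<Rightarrow> ('a \<Rightarrow> 'c) \<Rightarrow> 'c set \<Rightarrow> 'c topology" where
  "quotient_top T q B = topology (\<lambda>U. U \<subseteq> B \<and> openin T {x \<in> topspace T. q x \<in> U})"

end

theory Submission
  imports Defs
begin

lemma quotient_top_open:
  assumes "q ` topspace T \<subseteq> B"
  shows "openin (quotient_top T q B) U \<longleftrightarrow> U \<subseteq> B \<and> openin T {x \<in> topspace T. q x \<in> U}"
    and "topspace (quotient_top T q B) = B"
proof -
  have ist: "istopology (\<lambda>U. U \<subseteq> B \<and> openin T {x \<in> topspace T. q x \<in> U})"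
    unfolding istopology_def
  proof (rule conjI; intro allI impI)
    fix S S'
    assume a1: "S \<subseteq> B \<and> openin T {x \<in> topspace T. q x \<in> S}" and a2: "S' \<subseteq> B \<and> openin T {x \<in> topspace T. q x \<in> S'}"
    have "openin T ({x \<in> topspace T. q x \<in> S} \<inter> {x \<in> topspace T. q x \<in> S'})"
      using a1 a2 by (intro openin_Int) simp_all
    moreover have "{x \<in> topspace T. q x \<in> S} \<inter> {x \<in> topspace T. q x \<in> S'} = {x \<in> topspace T. q x \<in> S \<inter> S'}" by blast
    ultimately have "openin T {x \<in> topspace T. q x \<in> S \<inter> S'}" by simp
    moreover have "S \<inter> S' \<subseteq> B" using a1 by blast
    ultimately show "S \<inter> S' \<subseteq> B \<and> openin T {x \<in> topspace T. q x \<in> S \<inter> S'}" by blast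
  next
    fix K
    assume K: "\<forall>S\<in>K. S \<subseteq> B \<and> openin T {x \<in> topspace T. q x \<in> S}"
    have "openin T (\<Union>S\<in>K. {x \<in> topspace T. q x \<in> S})" using K by (intro openin_Union) blast
    moreover have "(\<Union>S\<in>K. {x \<in> topspace T. q x \<in> S}) = {x \<in> topspace T. q x \<in> \<Union>K}" by blast
    ultimately have "openin T {x \<in> topspace T. q x \<in> \<Union>K}" by simp
    moreover have "\<Union>K \<subseteq> B" using K by blast
    ultimately show "\<Union>K \<subseteq> B \<and> openin T {x \<in> topspace T. q x \<in> \<Union>K}" by blast
  qed
  show o: "openin (quotient_top T q B) U \<longleftrightarrow> U \<subseteq> B \<and> openin T {x \<in> topspace T. q x \<in> U}" for U
    unfolding quotient_top_def using ist by simp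
  have "openin (quotient_top T q B) B"
  proof -
    have "{x \<in> topspace T. q x \<in> B} = topspace T" using assms by blast
    then show ?thesis unfolding o by simp
  qed
  moreover have "topspace (quotient_top T q B) \<subseteq> B"
    unfolding topspace_def o by blast
  ultimately show "topspace (quotient_top T q B) = B"
    by (meson openin_subset subset_antisym)
qed

lemma (in normal) main_aux:
  fixes T :: "'a topology"
    and l :: "nat \<Rightarrow> 'a \<Rightarrow> real" and L :: "'a \<Rightarrow> real"
  assumes "compact_group G T"
    and "H \<lhd> G"
    and "\<And>n. length_function G (l n)"
    and "\<And>n. continuous_map T euclideanreal (l n)"
    and "uniform_limit (carrier G) l L sequentially"
    and "\<And>g. g \<in> H \<Longrightarrow> L g = 0"
    and "\<And>g. g \<in> carrier G \<Longrightarrow> g \<notin> H \<Longrightarrow> L g > 0"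
  shows "\<exists>Linf :: 'a set \<Rightarrow> real.
           length_function (G Mod H) Linf \<and>
           continuous_map (quotient_top T (\<lambda>g. H #> g) (carrier (G Mod H))) euclideanreal Linf \<and>
           (\<forall>g\<in>carrier G. (\<lambda>n. l n g) \<longlonglongrightarrow> Linf (H #> g))"
proof -
  have grp: "group G" and top: "topspace T = carrier G"
    using assms(1) unfolding compact_group_def topological_group_def by auto
  have lim: "(\<lambda>n. l n g) \<longlonglongrightarrow> L g" if "g \<in> carrier G" for g
    by (rule tendsto_uniform_limitI[OF assms(5) that])
  have lf: "\<And>n g. g \<in> carrier G \<Longrightarrow> 0 \<le> l n g"
    "\<And>n g. g \<in> carrier G \<Longrightarrow> l n (inv g) = l n g"
    "\<And>n g h. g \<in> carrier G \<Longrightarrow> h \<in> carrier G \<Longrightarrow> l n (g \<otimes> h) \<le> l n g + l n h"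
    using assms(3) unfolding length_function_def by auto
  have Lnn: "0 \<le> L g" if "g \<in> carrier G" for g
    using lim[OF that] lf(1)[OF that] by (meson LIMSEQ_le_const)
  have Linv: "L (inv g) = L g" if "g \<in> carrier G" for g
    using lim[OF that] lim[of "inv g"] lf(2)[OF that] that
    by (metis (no_types, lifting) LIMSEQ_unique ext inv_closed)
  have Ltri: "L (g \<otimes> h) \<le> L g + L h" if "g \<in> carrier G" "h \<in> carrier G" for g h
    by (rule LIMSEQ_le[OF lim tendsto_add[OF lim lim]]) (use that lf(3) in auto)
  have Lcos: "L (h \<otimes> g) = L g" if "h \<in> H" "g \<in> carrier G" for h g
  proof -
    have hc: "h \<in> carrier G" using that subset by auto
    have "L (h \<otimes> g) \<le> L g" using Ltri[OF hc that(2)] assms(6)[OF that(1)] by simp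
    moreover have "g = inv h \<otimes> (h \<otimes> g)" using hc that(2) by (simp add: m_assoc[symmetric])
    then have "L g \<le> L (inv h) + L (h \<otimes> g)" using Ltri[of "inv h" "h \<otimes> g"] hc that(2) by simp
    moreover have "L (inv h) = 0" using assms(6) that(1) by (simp add: m_inv_closed)
    ultimately show ?thesis by simp
  qed
  have Lwd: "L g = L g'" if "g \<in> carrier G" "g' \<in> carrier G" "H #> g = H #> g'" for g g'
  proof -
    have "g' \<in> H #> g" using that repr_independenceD[OF subgroup_axioms] by metis
    then obtain h where "h \<in> H" "g' = h \<otimes> g" unfolding r_coset_def by auto
    then show ?thesis using Lcos that by simp
  qed
  define Linf where "Linf C = L (SOME g. g \<in> carrier G \<and> C = H #> g)" for C
  have Linf: "Linf (H #> g) = L g" if "g \<in> carrier G" for g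
  proof -
    have "\<exists>g'. g' \<in> carrier G \<and> H #> g = H #> g'" using that by auto
    then have "(SOME g'. g' \<in> carrier G \<and> H #> g = H #> g') \<in> carrier G \<and>
       H #> g = H #> (SOME g'. g' \<in> carrier G \<and> H #> g = H #> g')" by (rule someI_ex)
    then show ?thesis unfolding Linf_def using Lwd that by metis
  qed
  have carr: "C \<in> carrier (G Mod H) \<longleftrightarrow> (\<exists>g\<in>carrier G. C = H #> g)" for C
    by (auto simp: carrier_FactGroup)
  have LH: "L g = 0 \<longleftrightarrow> H #> g = H" if "g \<in> carrier G" for g
  proof
    assume "L g = 0"
    then have "g \<in> H" using assms(7)[OF that] by force
    then show "H #> g = H" using coset_join2[OF that subgroup_axioms] by simp
  next
    assume "H #> g = H"
    then have "g \<in> H" using rcos_self[OF that subgroup_axioms] by simp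
    then show "L g = 0" using assms(6) by simp
  qed
  have "length_function (G Mod H) Linf"
    unfolding length_function_def
  proof (intro conjI ballI)
    fix C assume "C \<in> carrier (G Mod H)"
    then obtain g where g: "g \<in> carrier G" "C = H #> g" using carr by auto
    show "0 \<le> Linf C" using g Linf Lnn by simp
    show "(Linf C = 0) = (C = \<one>\<^bsub>G Mod H\<^esub>)" using g Linf LH by simp
    have "inv\<^bsub>G Mod H\<^esub> C = H #> inv g"
      using inv_FactGroup[OF \<open>C \<in> _\<close>] rcos_inv g by simp
    then show "Linf (inv\<^bsub>G Mod H\<^esub> C) = Linf C" using g Linf Linv by simp
  next
    fix C D assume "C \<in> carrier (G Mod H)" "D \<in> carrier (G Mod H)"
    then obtain g h where g: "g \<in> carrier G" "C = H #> g" "h \<in> carrier G" "D = H #> h" using carr by meson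
    have "C \<otimes>\<^bsub>G Mod H\<^esub> D = H #> (g \<otimes> h)" using g rcos_sum by simp
    then show "Linf (C \<otimes>\<^bsub>G Mod H\<^esub> D) \<le> Linf C + Linf D" using g Linf Ltri by simp
  qed
  moreover have contL: "continuous_map T euclideanreal L"
  proof -
    have "continuous_map T Met_TC.mtopology L"
    proof (rule Met_TC.continuous_map_uniform_limit_alt[where F=sequentially and f=l])
      show "\<forall>\<^sub>F n in sequentially. continuous_map T Met_TC.mtopology (l n)"
        using assms(4) by simp
      show "L \<in> topspace T \<rightarrow> UNIV" by simp
      show "\<forall>\<^sub>F n in sequentially. \<forall>x\<in>topspace T. dist (l n x) (L x) < e" if "0 < e" for e
        using uniform_limitD[OF assms(5) that] top by simp
    qed simp
    then show ?thesis by simp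
  qed
  moreover have "continuous_map (quotient_top T (\<lambda>g. H #>\<^bsub>G\<^esub> g) (carrier (G Mod H))) euclideanreal Linf"
  proof -
    have sub: "(\<lambda>g. H #> g) ` topspace T \<subseteq> carrier (G Mod H)" using top carr by auto
    show ?thesis
      unfolding continuous_map_def
    proof (intro conjI allI impI)
      show "Linf \<in> topspace (quotient_top T (\<lambda>g. H #> g) (carrier (G Mod H))) \<rightarrow> topspace euclideanreal"
        by simp
      fix U :: "real set" assume "openin euclideanreal U"
      then have "openin T {x \<in> topspace T. L x \<in> U}"
        using contL by (simp add: continuous_map_def)
      moreover have "{x \<in> topspace T. H #> x \<in> {C \<in> topspace (quotient_top T (\<lambda>g. H #> g) (carrier (G Mod H))). Linf C \<in> U}}
          = {x \<in> topspace T. L x \<in> U}"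
        using quotient_top_open(2)[OF sub] top Linf carr by auto
      ultimately show "openin (quotient_top T (\<lambda>g. H #> g) (carrier (G Mod H)))
          {C \<in> topspace (quotient_top T (\<lambda>g. H #> g) (carrier (G Mod H))). Linf C \<in> U}"
        using quotient_top_open[OF sub] by auto
    qed
  qed
  moreover have "\<forall>g\<in>carrier G. (\<lambda>n. l n g) \<longlonglongrightarrow> Linf (H #> g)"
    using lim Linf by simp
  ultimately show ?thesis by blast
qed

theorem mainTheorem16:
  fixes G :: "('a, 'b) monoid_scheme" and T :: "'a topology"
    and H :: "'a set" and l :: "nat \<Rightarrow> 'a \<Rightarrow> real" and L :: "'a \<Rightarrow> real"
  assumes "compact_group G T"
    and "H \<lhd> G"
    and "\<And>n. length_function G (l n)"
    and "\<And>n. continuous_map T euclideanreal (l n)"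
    and "uniform_limit (carrier G) l L sequentially"
    and "\<And>g. g \<in> H \<Longrightarrow> L g = 0"
    and "\<And>g. g \<in> carrier G \<Longrightarrow> g \<notin> H \<Longrightarrow> L g > 0"
  shows "\<exists>Linf :: 'a set \<Rightarrow> real.
           length_function (G Mod H) Linf \<and>
           continuous_map (quotient_top T (\<lambda>g. H #>\<^bsub>G\<^esub> g) (carrier (G Mod H))) euclideanreal Linf \<and>
           (\<forall>g\<in>carrier G. (\<lambda>n. l n g) \<longlonglongrightarrow> Linf (H #>\<^bsub>G\<^esub> g))"
  using normal.main_aux[OF assms(2) assms] by blast

end
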